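(* Define for real $y$ $$rt(y)=1-\int_0^{\pi/2}e^{-y^2\tan s}\,y^2\sec^2 s\,ds,\qquad H_1(y)=1+\int_0^{\pi/2}\left(\frac{y\sec^2 s\, e^{-y\tan s}}{\left(1+e^{-y\tan s}\right)^2}-\frac12 e^{-y^2\tan s}y^2\sec^2 s\right)ds$$ (improper Riemann integrals at $s=\pi/2$). For a positive integer $n$ define $$\sigma_0(n)=\sum_{i=1}^{\infty}rt\!\left(\sin\!\left(\pi\frac{n}{i}\right)\right),\qquad fes(n)=rt\bigl(\sigma_0(n)-2\bigr).$$ Then for every positive integer $n$, $\sigma_0(n)$ equals the number of positive divisors of $n$, and $fes(n)=1$ if $n$ is prime and $fes(n)=0$ otherwise. Moreover, for every real $x$, $$\sum_{i=1}^{\infty}fes(i)\,H_1(x-i)=\pi(x),$$ where $\pi(x)$ denotes the number of primes $p\le x$. *)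

theory Defs
  imports "HOL-Analysis.Analysis" "HOL-Computational_Algebra.Primes"
begin

definition improper_integral_right :: "real \<Rightarrow> real \<Rightarrow> (real \<Rightarrow> real) \<Rightarrow> real" where
  "improper_integral_right a b f = Lim (at_left b) (\<lambda>c. integral {a..c} f)"

definition rt :: "real \<Rightarrow> real" where
  "rt y = 1 - improper_integral_right 0 (pi/2)
      (\<lambda>s. exp (- (y^2 * tan s)) * y^2 * (1 / (cos s)^2))"

definition H1 :: "real \<Rightarrow> real" where
  "H1 y = 1 + improper_integral_right 0 (pi/2)
      (\<lambda>s. y * (1 / (cos s)^2) * exp (- (y * tan s)) / (1 + exp (- (y * tan s)))^2
           - (1/2) * exp (- (y^2 * tan s)) * y^2 * (1 / (cos s)^2))"

text \<open>sigma0 n = sum over i \<ge> 1 of rt(sin(pi n / i)); the series is indexed from 0 via i = Suc k.\<close>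
definition sigma0 :: "nat \<Rightarrow> real" where
  "sigma0 n = (\<Sum>k. rt (sin (pi * real n / real (Suc k))))"

definition fes :: "nat \<Rightarrow> real" where
  "fes n = rt (sigma0 n - 2)"

end

theory Submission
  imports Defs
begin

lemma improper_eval:
  assumes der: "\<And>x. 0 \<le> x \<Longrightarrow> x < pi/2 \<Longrightarrow> (F has_real_derivative f x) (at x)"
    and lim: "(F \<longlongrightarrow> L) (at_left (pi/2))"
  shows "improper_integral_right 0 (pi/2) f = L - F 0"
proof -
  have ev: "eventually (\<lambda>c. c \<in> {0<..<pi/2}) (at_left (pi/2))"
    by (rule eventually_at_left_real) simp
  have eq: "eventually (\<lambda>c. F c - F 0 = integral {0..c} f) (at_left (pi/2))"
    using ev
  proof (rule eventually_mono)
    fix c assume c: "c \<in> {0<..<pi/2}"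
    have "(f has_integral (F c - F 0)) {0..c}"
    proof (rule fundamental_theorem_of_calculus)
      show "0 \<le> c" using c by simp
      fix x assume "x \<in> {0..c}"
      then have "(F has_real_derivative f x) (at x)" using der c by simp
      then show "(F has_vector_derivative f x) (at x within {0..c})"
        using has_real_derivative_iff_has_vector_derivative has_vector_derivative_at_within by blast
    qed
    then show "F c - F 0 = integral {0..c} f" by (simp add: integral_unique)
  qed
  have "((\<lambda>c. F c - F 0) \<longlongrightarrow> L - F 0) (at_left (pi/2))"
    by (intro tendsto_intros lim)
  then have "((\<lambda>c. integral {0..c} f) \<longlongrightarrow> L - F 0) (at_left (pi/2))"
    using eq by (rule tendsto_cong[THEN iffD1, rotated])
  then show ?thesis unfolding improper_integral_right_def
    by (intro tendsto_Lim) simp_all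
qed

lemma cos_pos_aux:
  assumes "0 \<le> x" "x < pi/2" shows "cos x \<noteq> 0"
proof -
  have "-(pi/2) < x" using assms pi_gt_zero by linarith
  then have "0 < cos x" using cos_gt_zero_pi assms(2) by blast
  then show ?thesis by simp
qed

lemma exp_neg_lim:
  fixes g :: "'a \<Rightarrow> real"
  assumes "filterlim g at_top F"
  shows "((\<lambda>s. exp (- g s)) \<longlongrightarrow> 0) F"
proof -
  have "filterlim (\<lambda>s. - g s) at_bot F"
    by (rule filterlim_uminus_at_top[THEN iffD1, OF assms])
  then show ?thesis using exp_at_bot filterlim_compose by blast
qed

lemma rt_eq: "rt y = (if y = 0 then 1 else 0)"
proof -
  let ?F = "\<lambda>s. - exp (- (y^2 * tan s))"
  have der: "(?F has_real_derivative exp (- (y^2 * tan s)) * y^2 * (1 / (cos s)^2)) (at s)"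
    if "0 \<le> s" "s < pi/2" for s
    using cos_pos_aux[OF that]
    by (auto intro!: derivative_eq_intros simp: field_simps power2_eq_square)
  show ?thesis
  proof (cases "y = 0")
    case True
    have lim: "(?F \<longlongrightarrow> -1) (at_left (pi/2))" using True by simp
    from improper_eval[OF der lim] True show ?thesis unfolding rt_def by simp
  next
    case False
    have "filterlim (\<lambda>s. y^2 * tan s) at_top (at_left (pi/2))"
      by (rule filterlim_tendsto_pos_mult_at_top[OF tendsto_const _ filterlim_tan_at_left])
         (use False in simp)
    from tendsto_minus[OF exp_neg_lim[OF this]]
    have lim: "(?F \<longlongrightarrow> 0) (at_left (pi/2))" by simp
    from improper_eval[OF der lim] False show ?thesis unfolding rt_def by simp
  qed
qed

lemma H1_eq: "H1 y = (if y \<ge> 0 then 1 else 0)"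
proof -
  let ?G = "\<lambda>s. inverse (1 + exp (- (y * tan s))) + exp (- (y^2 * tan s)) / 2"
  have der: "(?G has_real_derivative (y * (1 / (cos s)^2) * exp (- (y * tan s)) / (1 + exp (- (y * tan s)))^2
           - (1/2) * exp (- (y^2 * tan s)) * y^2 * (1 / (cos s)^2))) (at s)"
    if "0 \<le> s" "s < pi/2" for s
  proof -
    have a: "1 + exp (- (y * tan s)) \<noteq> 0" by (metis add_pos_pos exp_gt_zero less_irrefl zero_less_one)
    have c: "cos s \<noteq> 0" using cos_pos_aux[OF that] .
    have d0: "((\<lambda>s. 1 + exp (- (y * tan s))) has_real_derivative exp (- (y * tan s)) * (- (y * inverse ((cos s)^2)))) (at s)"
      using c by (auto intro!: derivative_eq_intros)
    have d1: "((\<lambda>s. inverse (1 + exp (- (y * tan s)))) has_real_derivative y * (1 / (cos s)^2) * exp (- (y * tan s)) / (1 + exp (- (y * tan s)))^2) (at s)"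
      using DERIV_inverse_fun[OF d0 a] by (rule DERIV_cong) (use a c in \<open>simp add: field_simps power2_eq_square\<close>)
    have d2: "((\<lambda>s. exp (- (y^2 * tan s)) / 2) has_real_derivative - ((1/2) * exp (- (y^2 * tan s)) * y^2 * (1 / (cos s)^2))) (at s)"
      using c by (auto intro!: derivative_eq_intros simp: field_simps)
    show ?thesis using DERIV_add[OF d1 d2] by (simp only: diff_conv_add_uminus)
  qed
  consider "y = 0" | "y > 0" | "y < 0" by linarith
  then show ?thesis
  proof cases
    case 1
    have lim: "(?G \<longlongrightarrow> 1) (at_left (pi/2))" using 1 by simp
    from improper_eval[OF der lim] 1 show ?thesis unfolding H1_def by simp
  next
    case 2
    have a: "filterlim (\<lambda>s. y^2 * tan s) at_top (at_left (pi/2))"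
      by (rule filterlim_tendsto_pos_mult_at_top[OF tendsto_const _ filterlim_tan_at_left])
         (use 2 in simp)
    have b: "filterlim (\<lambda>s. y * tan s) at_top (at_left (pi/2))"
      by (rule filterlim_tendsto_pos_mult_at_top[OF tendsto_const _ filterlim_tan_at_left])
         (use 2 in simp)
    have "(?G \<longlongrightarrow> inverse (1 + 0) + 0 / 2) (at_left (pi/2))"
      by (intro tendsto_intros exp_neg_lim a b) simp_all
    then have lim: "(?G \<longlongrightarrow> 1) (at_left (pi/2))" by simp
    from improper_eval[OF der lim] 2 show ?thesis unfolding H1_def by simp
  next
    case 3
    have a: "filterlim (\<lambda>s. y^2 * tan s) at_top (at_left (pi/2))"
      by (rule filterlim_tendsto_pos_mult_at_top[OF tendsto_const _ filterlim_tan_at_left])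
         (use 3 in simp)
    have b: "filterlim (\<lambda>s. (- y) * tan s) at_top (at_left (pi/2))"
      by (rule filterlim_tendsto_pos_mult_at_top[OF tendsto_const _ filterlim_tan_at_left])
         (use 3 in simp)
    have c: "filterlim (\<lambda>s. exp (- (y * tan s))) at_top (at_left (pi/2))"
      using filterlim_compose[OF exp_at_top b] by simp
    have d: "filterlim (\<lambda>s. 1 + exp (- (y * tan s))) at_top (at_left (pi/2))"
      by (rule filterlim_tendsto_add_at_top[OF tendsto_const c])
    have "(?G \<longlongrightarrow> 0 + 0 / 2) (at_left (pi/2))"
      by (intro tendsto_intros exp_neg_lim a tendsto_inverse_0_at_top d) simp
    then have lim: "(?G \<longlongrightarrow> 0) (at_left (pi/2))" by simp
    from improper_eval[OF der lim] 3 show ?thesis unfolding H1_def by simp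
  qed
qed


lemma sin_zero_dvd:
  assumes "n > 0"
  shows "sin (pi * real n / real (Suc k)) = 0 \<longleftrightarrow> Suc k dvd n"
proof
  assume "sin (pi * real n / real (Suc k)) = 0"
  then obtain i :: int where i: "pi * real n / real (Suc k) = of_int i * pi"
    by (auto simp: sin_zero_iff_int2)
  then have "pi * real n = pi * (of_int i * real (Suc k))"
    by (simp add: field_simps)
  then have "real n = of_int i * real (Suc k)"
    using pi_neq_zero by simp
  then have "int n = i * int (Suc k)"
    by (metis of_int_eq_iff of_int_mult of_int_of_nat_eq)
  then have "int (Suc k) dvd int n" by simp
  then show "Suc k dvd n" by (simp only: int_dvd_int_iff)
next
  assume "Suc k dvd n"
  then obtain m where "n = Suc k * m" by auto
  then have "real n = real (Suc k) * real m" by (simp add: algebra_simps)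
  then have "pi * real n / real (Suc k) = of_int (int m) * pi" by (simp add: field_simps)
  then show "sin (pi * real n / real (Suc k)) = 0" by (auto simp: sin_zero_iff_int2)
qed

lemma divisors_sums:
  assumes "n > 0"
  shows "(\<lambda>k. rt (sin (pi * real n / real (Suc k)))) sums real (card {d. d dvd n})"
proof -
  let ?N = "{k. Suc k dvd n}"
  have fin: "finite ?N"
    by (rule finite_subset[of _ "{..<n}"]) (use assms in \<open>auto dest: dvd_imp_le\<close>)
  have f: "rt (sin (pi * real n / real (Suc k))) = (if k \<in> ?N then 1 else 0)" for k
    using sin_zero_dvd[OF assms] by (simp add: rt_eq)
  have "(\<lambda>k. rt (sin (pi * real n / real (Suc k)))) sums (\<Sum>k\<in>?N. rt (sin (pi * real n / real (Suc k))))"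
    by (rule sums_finite[OF fin]) (subst f, simp)
  also have "(\<Sum>k\<in>?N. rt (sin (pi * real n / real (Suc k)))) = (\<Sum>k\<in>?N. (if k \<in> ?N then 1 else 0))"
    by (rule sum.cong[OF refl f])
  also have "\<dots> = real (card ?N)" by simp
  also have "{d. d dvd n} = Suc ` ?N"
  proof (rule set_eqI, rule iffI)
    fix d assume "d \<in> {d. d dvd n}"
    then have "d dvd n" "d \<noteq> 0" using assms by auto
    then show "d \<in> Suc ` ?N" by (cases d) auto
  qed auto
  then have "card ?N = card {d. d dvd n}" by (simp add: card_image)
  finally show ?thesis .
qed

lemma card_divisors_2:
  assumes "n > (0::nat)"
  shows "card {d. d dvd n} = 2 \<longleftrightarrow> prime n"
proof
  assume p: "prime n"
  then have "{d. d dvd n} = {1, n}" by (auto simp: prime_nat_iff)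
  then show "card {d. d dvd n} = 2" using prime_gt_1_nat[OF p] by simp
next
  assume c: "card {d. d dvd n} = 2"
  have fin: "finite {d. d dvd n}"
    by (rule finite_subset[of _ "{..n}"]) (use assms in \<open>auto dest: dvd_imp_le\<close>)
  have "n \<noteq> 1" using c by auto
  then have n1: "1 < n" using assms by simp
  have sub: "{1, n} \<subseteq> {d. d dvd n}" by auto
  have "card {1, n} = 2" using n1 by simp
  then have eq: "{1, n} = {d. d dvd n}" using card_subset_eq[OF fin sub] c by simp
  show "prime n" unfolding prime_nat_iff
  proof (intro conjI allI impI n1)
    fix m assume "m dvd n"
    then have "m \<in> {1, n}" using eq by blast
    then show "m = 1 \<or> m = n" by simp
  qed
qed

lemma card_divisors_pos:
  assumes "n > (0::nat)" shows "card {d. d dvd n} \<noteq> 0"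
proof -
  have fin: "finite {d. d dvd n}"
    by (rule finite_subset[of _ "{..n}"]) (use assms in \<open>auto dest: dvd_imp_le\<close>)
  moreover have "1 \<in> {d. d dvd n}" by simp
  ultimately show ?thesis by auto
qed

theorem mainTheorem8:
  shows "(\<forall>n::nat. n > 0 \<longrightarrow>
            ((\<lambda>k. rt (sin (pi * real n / real (Suc k)))) sums real (card {d. d dvd n})) \<and>
            sigma0 n = real (card {d. d dvd n}) \<and>
            fes n = (if prime n then 1 else 0))
       \<and> (\<forall>x::real. (\<lambda>k. fes (Suc k) * H1 (x - real (Suc k)))
                     sums real (card {p::nat. prime p \<and> real p \<le> x}))"
proof (intro conjI allI impI)
  fix n :: nat assume n: "n > 0"
  show s: "(\<lambda>k. rt (sin (pi * real n / real (Suc k)))) sums real (card {d. d dvd n})"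
    by (rule divisors_sums[OF n])
  show sg: "sigma0 n = real (card {d. d dvd n})"
    unfolding sigma0_def using s by (rule sums_unique[symmetric])
  show "fes n = (if prime n then 1 else 0)"
    unfolding fes_def rt_eq sg using card_divisors_2[OF n] by auto
next
  fix x :: real
  have fesP: "fes n = (if prime n then 1 else 0)" if False: "n \<noteq> 0" for n
  proof -
    have s: "(\<lambda>k. rt (sin (pi * real n / real (Suc k)))) sums real (card {d. d dvd n})"
      using divisors_sums False by simp
    have sg: "sigma0 n = real (card {d. d dvd n})"
      unfolding sigma0_def using s by (rule sums_unique[symmetric])
    show ?thesis unfolding fes_def rt_eq sg using card_divisors_2 False by auto
  qed
  let ?N = "{k. prime (Suc k) \<and> real (Suc k) \<le> x}"
  have f: "fes (Suc k) * H1 (x - real (Suc k)) = (if k \<in> ?N then 1 else 0)" for k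
    by (simp add: fesP[of "Suc k"] H1_eq)
  have fin: "finite ?N"
  proof (rule finite_subset[of _ "{..nat \<lceil>x\<rceil>}"])
    show "?N \<subseteq> {..nat \<lceil>x\<rceil>}"
    proof
      fix k assume "k \<in> ?N"
      then have "real (Suc k) \<le> x" by simp
      then have "real k \<le> of_int \<lceil>x\<rceil>" using le_of_int_ceiling[of x] by linarith
      then have "int k \<le> \<lceil>x\<rceil>" by (metis of_int_le_iff of_int_of_nat_eq)
      then show "k \<in> {..nat \<lceil>x\<rceil>}" by auto
    qed
  qed simp
  have "(\<lambda>k. fes (Suc k) * H1 (x - real (Suc k))) sums (\<Sum>k\<in>?N. fes (Suc k) * H1 (x - real (Suc k)))"
    by (rule sums_finite[OF fin]) (subst f, simp)
  also have "(\<Sum>k\<in>?N. fes (Suc k) * H1 (x - real (Suc k))) = (\<Sum>k\<in>?N. (if k \<in> ?N then 1 else 0))"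
    by (rule sum.cong[OF refl f])
  also have "\<dots> = real (card ?N)" by simp
  also have "{p::nat. prime p \<and> real p \<le> x} = Suc ` ?N"
  proof (rule set_eqI, rule iffI)
    fix p assume "p \<in> {p::nat. prime p \<and> real p \<le> x}"
    then have "prime p" "real p \<le> x" "p \<noteq> 0" by (auto simp: prime_gt_0_nat)
    then show "p \<in> Suc ` ?N" by (cases p) auto
  qed auto
  then have "card ?N = card {p::nat. prime p \<and> real p \<le> x}" by (simp add: card_image)
  finally show "(\<lambda>k. fes (Suc k) * H1 (x - real (Suc k))) sums real (card {p::nat. prime p \<and> real p \<le> x})" .
qed

end
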